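(* For all integers $n\ge1$, $\Delta_1(n)=0$. For all integers $\ell>1$: $\Delta_\ell(1)<0$ and $\Delta_\ell(2)>0$. Moreover $\Delta_\ell(3)<0$ for $2\le\ell\le 13$ and $\Delta_\ell(3)>0$ for $\ell\ge 14$.
   Context: For integers $n\geq 0$ let $S_n$ be the symmetric group on $n$ elements ($S_0$ trivial). For an integer $\ell\geq 1$ let $C_{\ell,n}=\{(\pi_1,\dots,\pi_\ell)\in S_n^\ell : \pi_j\pi_k=\pi_k\pi_j \text{ for all } 1\le j,k\le \ell\}$ and $N_\ell(n)=|C_{\ell,n}|/|S_n|$ (so $N_\ell(0)=1$). Define $\Delta_\ell(n)=N_\ell(n)^2-N_\ell(n-1)N_\ell(n+1)$ for $n\geq 1$. *)

theory Defs
  imports Complex_Main "HOL-Library.FuncSet" "HOL-Combinatorics.Permutations"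
begin

definition sym_grp :: "nat \<Rightarrow> (nat \<Rightarrow> nat) set" where
  "sym_grp n = {p. p permutes {..<n}}"

definition comm_tuples :: "nat \<Rightarrow> nat \<Rightarrow> (nat \<Rightarrow> nat \<Rightarrow> nat) set" where
  "comm_tuples l n = {ps \<in> {..<l} \<rightarrow>\<^sub>E sym_grp n.
      \<forall>j<l. \<forall>k<l. ps j \<circ> ps k = ps k \<circ> ps j}"

definition N_comm :: "nat \<Rightarrow> nat \<Rightarrow> real" where
  "N_comm l n = real (card (comm_tuples l n)) / real (card (sym_grp n))"

definition Delta_comm :: "nat \<Rightarrow> nat \<Rightarrow> real" where
  "Delta_comm l n = (N_comm l n)^2 - N_comm l (n - 1) * N_comm l (n + 1)"

end

theory Submission
  imports Defs
begin

definition pl :: "nat list \<Rightarrow> nat \<Rightarrow> nat" where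
  "pl xs i = (if i < length xs then xs ! i else i)"
definition perms :: "nat \<Rightarrow> nat list list" where
  "perms n = filter distinct (List.n_lists n [0..<n])"
definition lcomm :: "nat \<Rightarrow> nat list \<Rightarrow> nat list \<Rightarrow> bool" where
  "lcomm n xs ys = list_all (\<lambda>i. xs ! (ys ! i) = ys ! (xs ! i)) [0..<n]"

lemma perms_mem: "xs \<in> set (perms n) \<longleftrightarrow> length xs = n \<and> distinct xs \<and> set xs \<subseteq> {..<n}"
  by (auto simp: perms_def set_n_lists)

lemma perms_set: "xs \<in> set (perms n) \<Longrightarrow> set xs = {..<n}"
  unfolding perms_mem
  by (metis card_lessThan card_subset_eq distinct_card finite_lessThan)

lemma pl_permutes: assumes "xs \<in> set (perms n)" shows "pl xs permutes {..<n}"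
proof (rule bij_imp_permutes)
  have l: "length xs = n" "distinct xs" using assms unfolding perms_mem by auto
  have sx: "set xs = {..<n}" using perms_set[OF assms] .
  have inj: "inj_on ((!) xs) {..<n}" using l by (intro inj_on_nth) auto
  have im: "(!) xs ` {..<n} = {..<n}"
  proof -
    have "(!) xs ` {0..<n} = set (take n xs)" using l(1) by (intro nth_image) simp
    then have "(!) xs ` {..<n} = set xs" using l(1) by (simp add: atLeast0LessThan)
    then show ?thesis using sx by simp
  qed
  have b: "bij_betw ((!) xs) {..<n} {..<n}" unfolding bij_betw_def using inj im by simp
  have "\<And>a. a \<in> {..<n} \<Longrightarrow> pl xs a = xs ! a" using l(1) by (simp add: pl_def)
  then have "bij_betw (pl xs) {..<n} {..<n} = bij_betw ((!) xs) {..<n} {..<n}" by (rule bij_betw_cong)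
  then show "bij_betw (pl xs) {..<n} {..<n}" using b by simp
  show "\<And>x. x \<notin> {..<n} \<Longrightarrow> pl xs x = x" using l by (simp add: pl_def)
qed

lemma permutes_pl: assumes "p permutes {..<n}"
  shows "map p [0..<n] \<in> set (perms n)" "p = pl (map p [0..<n])"
proof -
  have inj: "inj_on p (set [0..<n])" using permutes_inj[OF assms] by (meson inj_on_subset subset_UNIV)
  have "\<forall>i<n. p i < n" using permutes_in_image[OF assms] by simp
  then have "set (map p [0..<n]) \<subseteq> {..<n}" by auto
  then show "map p [0..<n] \<in> set (perms n)" unfolding perms_mem
    using inj by (simp add: distinct_map)
  have "p i = pl (map p [0..<n]) i" for i
  proof (cases "i < n")
    case True then show ?thesis by (simp add: pl_def)
  next
    case False then show ?thesis using permutes_not_in[OF assms, of i] by (simp add: pl_def)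
  qed
  then show "p = pl (map p [0..<n])" by (simp add: fun_eq_iff)
qed

lemma sym_grp_eq: "sym_grp n = pl ` set (perms n)"
  unfolding sym_grp_def using pl_permutes permutes_pl by blast

lemma pl_inj: "inj_on pl (set (perms n))"
proof (rule inj_onI)
  fix xs ys assume a: "xs \<in> set (perms n)" "ys \<in> set (perms n)" "pl xs = pl ys"
  have "length xs = n" "length ys = n" using a perms_mem by auto
  then show "xs = ys"
  proof (intro nth_equalityI)
    fix i assume "i < length xs"
    then show "xs ! i = ys ! i" using fun_cong[OF a(3), of i] \<open>length xs = n\<close> \<open>length ys = n\<close>
      by (simp add: pl_def)
  qed simp
qed

lemma comm_iff: assumes "xs \<in> set (perms n)" "ys \<in> set (perms n)"
  shows "(pl xs \<circ> pl ys = pl ys \<circ> pl xs) \<longleftrightarrow> lcomm n xs ys"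
proof -
  have l: "length xs = n" "length ys = n" using assms perms_mem by auto
  have sx: "xs ! i < n" if "i < n" for i
  proof -
    have "xs ! i \<in> set xs" using that l by simp
    then show ?thesis using perms_set[OF assms(1)] by simp
  qed
  have sy: "ys ! i < n" if "i < n" for i
  proof -
    have "ys ! i \<in> set ys" using that l by simp
    then show ?thesis using perms_set[OF assms(2)] by simp
  qed
  show ?thesis
  proof
    assume h: "pl xs \<circ> pl ys = pl ys \<circ> pl xs"
    show "lcomm n xs ys" unfolding lcomm_def list_all_iff
    proof
      fix i assume "i \<in> set [0..<n]"
      then have i: "i < n" by simp
      have "pl xs (pl ys i) = pl ys (pl xs i)" using h by (metis comp_apply)
      then show "xs ! (ys ! i) = ys ! (xs ! i)" using i l sx[OF i] sy[OF i] by (simp add: pl_def)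
    qed
  next
    assume h: "lcomm n xs ys"
    show "pl xs \<circ> pl ys = pl ys \<circ> pl xs"
    proof
      fix i
      show "(pl xs \<circ> pl ys) i = (pl ys \<circ> pl xs) i"
      proof (cases "i < n")
        case True
        then have "xs ! (ys ! i) = ys ! (xs ! i)" using h unfolding lcomm_def list_all_iff by simp
        then show ?thesis using True l sx[OF True] sy[OF True] by (simp add: pl_def)
      qed (simp add: pl_def l)
    qed
  qed
qed

lemma card_union_PiE:
  fixes S T :: "nat \<Rightarrow> 'a set"
  assumes I: "finite I" "I \<noteq> {}" and fin: "\<forall>k<M. finite (S k)"
    and TS: "\<forall>k<M. T k \<subseteq> S k" and T0: "T 0 = {}"
    and int: "\<forall>m<M. \<forall>k<m. S m \<inter> S k \<subseteq> T m"
    and ex: "\<forall>m<M. 0 < m \<longrightarrow> (\<exists>k<m. T m \<subseteq> S k)"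
  shows "card (\<Union>k<M. PiE I (\<lambda>_. S k)) = (\<Sum>k<M. card (S k) ^ card I - card (T k) ^ card I)"
  using fin TS int ex
proof (induction M)
  case 0
  then show ?case by simp
next
  case (Suc M)
  let ?U = "\<Union>k<M. PiE I (\<lambda>_. S k)"
  have p1: "\<forall>k<M. finite (S k)" using Suc.prems(1) by simp
  have p2: "\<forall>k<M. T k \<subseteq> S k" using Suc.prems(2) by simp
  have p3: "\<forall>m<M. \<forall>k<m. S m \<inter> S k \<subseteq> T m" using Suc.prems(3) by simp
  have p4: "\<forall>m<M. 0 < m \<longrightarrow> (\<exists>k<m. T m \<subseteq> S k)" using Suc.prems(4) by simp
  have IH: "card ?U = (\<Sum>k<M. card (S k) ^ card I - card (T k) ^ card I)"
    using Suc.IH[OF p1 p2 p3 p4] .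
  have eq: "(\<Union>k<Suc M. PiE I (\<lambda>_. S k)) = PiE I (\<lambda>_. S M) \<union> ?U"
    by (auto simp: lessThan_Suc)
  have finS: "finite (S M)" using Suc.prems(1) by simp
  have TSM: "T M \<subseteq> S M" using Suc.prems(2) by simp
  have finT: "finite (T M)" using finS TSM finite_subset by blast
  have fU: "finite ?U" using p1 I by (simp add: finite_PiE)
  have fP: "finite (PiE I (\<lambda>_. S M))" using finS I by (auto intro!: finite_PiE)
  have inter: "PiE I (\<lambda>_. S M) \<inter> ?U = PiE I (\<lambda>_. T M)"
  proof (cases "M = 0")
    case True
    then show ?thesis using T0 I by (auto simp: PiE_eq_empty_iff)
  next
    case False
    then obtain k0 where k0: "k0 < M" "T M \<subseteq> S k0" using Suc.prems(4) by auto
    show ?thesis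
    proof
      show "PiE I (\<lambda>_. S M) \<inter> ?U \<subseteq> PiE I (\<lambda>_. T M)"
      proof
        fix f assume "f \<in> PiE I (\<lambda>_. S M) \<inter> ?U"
        then obtain k where k: "k < M" "f \<in> PiE I (\<lambda>_. S M)" "f \<in> PiE I (\<lambda>_. S k)" by auto
        then have "f \<in> PiE I (\<lambda>_. S M) \<inter> PiE I (\<lambda>_. S k)" by simp
        then have f: "f \<in> PiE I (\<lambda>_. S M \<inter> S k)" by (simp only: PiE_Int)
        have "S M \<inter> S k \<subseteq> T M" using Suc.prems(3) k by simp
        then have "PiE I (\<lambda>_. S M \<inter> S k) \<subseteq> PiE I (\<lambda>_. T M)" by (rule PiE_mono)
        then show "f \<in> PiE I (\<lambda>_. T M)" using f by blast
      qed
      show "PiE I (\<lambda>_. T M) \<subseteq> PiE I (\<lambda>_. S M) \<inter> ?U"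
      proof -
        have "PiE I (\<lambda>_. T M) \<subseteq> PiE I (\<lambda>_. S M)" using TSM by (rule PiE_mono)
        moreover have "PiE I (\<lambda>_. T M) \<subseteq> PiE I (\<lambda>_. S k0)" using k0(2) by (rule PiE_mono)
        ultimately show ?thesis using k0(1) by blast
      qed
    qed
  qed
  have cP: "card (PiE I (\<lambda>_. S M)) = card (S M) ^ card I" "card (PiE I (\<lambda>_. T M)) = card (T M) ^ card I"
    using I by (simp_all add: card_PiE)
  have le: "card (T M) ^ card I \<le> card (S M) ^ card I"
    using card_mono[OF finS TSM] by (simp add: power_mono)
  have "card (PiE I (\<lambda>_. S M) \<union> ?U) + card (PiE I (\<lambda>_. S M) \<inter> ?U) = card (PiE I (\<lambda>_. S M)) + card ?U"
    using card_Un_Int[OF fP fU] by simp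
  then show ?case unfolding eq using inter cP IH le by simp
qed

lemma comm_tuples_union:
  assumes C1: "\<forall>F\<in>set fam. \<forall>x\<in>set F. x \<in> set (perms n) \<and> (\<forall>y\<in>set F. lcomm n x y)"
    and C2: "\<forall>xs\<in>set (perms n). xs \<in> set (hd fam) \<or> (\<exists>F\<in>set fam. \<forall>ys\<in>set (perms n). lcomm n xs ys \<longrightarrow> ys \<in> set F)"
    and ne: "fam \<noteq> []"
  shows "comm_tuples l n = (\<Union>F\<in>set fam. {..<l} \<rightarrow>\<^sub>E pl ` set F)"
proof
  show "comm_tuples l n \<subseteq> (\<Union>F\<in>set fam. {..<l} \<rightarrow>\<^sub>E pl ` set F)"
  proof
    fix ps assume ps: "ps \<in> comm_tuples l n"
    then have P0: "ps \<in> {..<l} \<rightarrow>\<^sub>E sym_grp n"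
      and com: "\<forall>j<l. \<forall>k<l. ps j \<circ> ps k = ps k \<circ> ps j"
      unfolding comm_tuples_def by simp_all
    have P: "ps \<in> {..<l} \<rightarrow>\<^sub>E pl ` set (perms n)" using P0 by (simp only: sym_grp_eq)
    have ext: "ps \<in> extensional {..<l}" using P by (simp add: PiE_iff)
    have vals: "\<forall>j<l. ps j \<in> pl ` set (perms n)" using P by (simp add: PiE_iff)
    show "ps \<in> (\<Union>F\<in>set fam. {..<l} \<rightarrow>\<^sub>E pl ` set F)"
    proof (cases "\<forall>j<l. ps j \<in> pl ` set (hd fam)")
      case True
      then have "ps \<in> {..<l} \<rightarrow>\<^sub>E pl ` set (hd fam)" using ext by (simp add: PiE_iff)
      then show ?thesis by (rule UN_I[OF hd_in_set[OF ne]])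
    next
      case False
      then obtain j where j: "j < l" "ps j \<notin> pl ` set (hd fam)" by blast
      obtain xs where xs: "xs \<in> set (perms n)" "ps j = pl xs" using vals j(1) by blast
      have "xs \<notin> set (hd fam)" using j(2) xs(2) by blast
      then obtain F where F: "F \<in> set fam" "\<forall>ys\<in>set (perms n). lcomm n xs ys \<longrightarrow> ys \<in> set F"
        using C2 xs(1) by blast
      have "ps k \<in> pl ` set F" if k: "k < l" for k
      proof -
        obtain ys where ys: "ys \<in> set (perms n)" "ps k = pl ys" using vals k by blast
        have "ps j \<circ> ps k = ps k \<circ> ps j" using com j(1) k by blast
        then have "pl xs \<circ> pl ys = pl ys \<circ> pl xs" using xs(2) ys(2) by simp
        then have "lcomm n xs ys" using comm_iff[OF xs(1) ys(1)] by blast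
        then have "ys \<in> set F" using F(2) ys(1) by blast
        then show ?thesis using ys(2) by blast
      qed
      then have "ps \<in> {..<l} \<rightarrow>\<^sub>E pl ` set F" using ext by (simp add: PiE_iff)
      then show ?thesis by (rule UN_I[OF F(1)])
    qed
  qed
  show "(\<Union>F\<in>set fam. {..<l} \<rightarrow>\<^sub>E pl ` set F) \<subseteq> comm_tuples l n"
  proof
    fix ps assume "ps \<in> (\<Union>F\<in>set fam. {..<l} \<rightarrow>\<^sub>E pl ` set F)"
    then obtain F where F: "F \<in> set fam" "ps \<in> {..<l} \<rightarrow>\<^sub>E pl ` set F" by blast
    have FC: "\<forall>x\<in>set F. x \<in> set (perms n) \<and> (\<forall>y\<in>set F. lcomm n x y)" using C1 F(1) by blast
    have sub: "pl ` set F \<subseteq> sym_grp n" unfolding sym_grp_eq using FC by blast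
    have "{..<l} \<rightarrow>\<^sub>E pl ` set F \<subseteq> {..<l} \<rightarrow>\<^sub>E sym_grp n" using sub by (rule PiE_mono)
    then have "ps \<in> {..<l} \<rightarrow>\<^sub>E sym_grp n" using F(2) by blast
    moreover have "\<forall>j<l. \<forall>k<l. ps j \<circ> ps k = ps k \<circ> ps j"
    proof (intro allI impI)
      fix j k assume jk: "j < l" "k < l"
      obtain x where x: "x \<in> set F" "ps j = pl x" using F(2) jk(1) by (auto simp: PiE_iff)
      obtain y where y: "y \<in> set F" "ps k = pl y" using F(2) jk(2) by (auto simp: PiE_iff)
      have "lcomm n x y" "x \<in> set (perms n)" "y \<in> set (perms n)" using FC x(1) y(1) by blast+
      then have "pl x \<circ> pl y = pl y \<circ> pl x" using comm_iff by blast
      then show "ps j \<circ> ps k = ps k \<circ> ps j" using x(2) y(2) by simp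
    qed
    ultimately show "ps \<in> comm_tuples l n" unfolding comm_tuples_def by simp
  qed
qed

lemma card_pl_image:
  assumes "set F \<subseteq> set (perms n)" "distinct F"
  shows "card (pl ` set F) = length F"
proof -
  have "inj_on pl (set F)" using pl_inj assms(1) by (rule inj_on_subset)
  then have "card (pl ` set F) = card (set F)" by (rule card_image)
  also have "\<dots> = length F" using assms(2) by (rule distinct_card)
  finally show ?thesis .
qed

lemma card_comm:
  assumes l: "l \<ge> 1"
    and C1: "\<forall>F\<in>set fam. \<forall>x\<in>set F. x \<in> set (perms n) \<and> (\<forall>y\<in>set F. lcomm n x y)"
    and C2: "\<forall>xs\<in>set (perms n). xs \<in> set (hd fam) \<or> (\<exists>F\<in>set fam. \<forall>ys\<in>set (perms n). lcomm n xs ys \<longrightarrow> ys \<in> set F)"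
    and ne: "fam \<noteq> []" and len: "length tfam = length fam" and t0: "hd tfam = []"
    and C3: "\<forall>m\<in>set [0..<length fam]. distinct (fam!m) \<and> distinct (tfam!m) \<and> set (tfam!m) \<subseteq> set (fam!m)
        \<and> (\<forall>k\<in>set [0..<m]. set (fam!m) \<inter> set (fam!k) \<subseteq> set (tfam!m))
        \<and> (0 < m \<longrightarrow> (\<exists>k\<in>set [0..<m]. set (tfam!m) \<subseteq> set (fam!k)))"
  shows "card (comm_tuples l n) = (\<Sum>k<length fam. length (fam!k) ^ l - length (tfam!k) ^ l)"
proof -
  define S where "S k = pl ` set (fam!k)" for k
  define T where "T k = pl ` set (tfam!k)" for k
  have C3': "distinct (fam!m) \<and> distinct (tfam!m) \<and> set (tfam!m) \<subseteq> set (fam!m)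
        \<and> (\<forall>k<m. set (fam!m) \<inter> set (fam!k) \<subseteq> set (tfam!m))
        \<and> (0 < m \<longrightarrow> (\<exists>k<m. set (tfam!m) \<subseteq> set (fam!k)))" if "m < length fam" for m
    using C3 that by (simp add: atLeast0LessThan Bex_def)
  have U: "(\<Union>F\<in>set fam. {..<l} \<rightarrow>\<^sub>E pl ` set F) = (\<Union>k<length fam. PiE {..<l} (\<lambda>_. S k))"
  proof -
    have "set fam = (\<lambda>k. fam ! k) ` {..<length fam}" by (simp add: atLeast0LessThan[symmetric] nth_image)
    then show ?thesis unfolding S_def by simp
  qed
  have inF: "set (fam!k) \<subseteq> set (perms n)" if "k < length fam" for k
  proof -
    have "fam ! k \<in> set fam" using that by (rule nth_mem)
    then show ?thesis using C1 by blast
  qed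
  have inT: "set (tfam!k) \<subseteq> set (perms n)" if "k < length fam" for k
    using C3'[OF that] inF[OF that] by blast
  have cS: "card (S k) = length (fam!k)" if "k < length fam" for k
    unfolding S_def using inF[OF that] C3'[OF that] by (simp add: card_pl_image)
  have cT: "card (T k) = length (tfam!k)" if "k < length fam" for k
    unfolding T_def using inT[OF that] C3'[OF that] by (simp add: card_pl_image)
  have main: "card (\<Union>k<length fam. PiE {..<l} (\<lambda>_. S k)) =
      (\<Sum>k<length fam. card (S k) ^ card {..<l} - card (T k) ^ card {..<l})"
  proof (rule card_union_PiE)
    show "finite {..<l}" by simp
    show "{..<l} \<noteq> {}" using l by (simp add: lessThan_empty_iff)
    show "\<forall>k<length fam. finite (S k)" unfolding S_def by simp
    show "\<forall>k<length fam. T k \<subseteq> S k" unfolding S_def T_def using C3' by (meson image_mono)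
    have "tfam ! 0 = []" using t0 ne len by (cases tfam) auto
    then show "T 0 = {}" unfolding T_def by simp
    show "\<forall>m<length fam. \<forall>k<m. S m \<inter> S k \<subseteq> T m"
    proof (intro allI impI)
      fix m k assume mk: "m < length fam" "k < m"
      have km: "k < length fam" using mk by simp
      have "pl ` (set (fam!m) \<inter> set (fam!k)) = S m \<inter> S k"
        unfolding S_def using inj_on_image_Int[OF pl_inj inF[OF mk(1)] inF[OF km]] .
      moreover have "set (fam!m) \<inter> set (fam!k) \<subseteq> set (tfam!m)" using C3'[OF mk(1)] mk(2) by blast
      ultimately show "S m \<inter> S k \<subseteq> T m" unfolding T_def by blast
    qed
    show "\<forall>m<length fam. 0 < m \<longrightarrow> (\<exists>k<m. T m \<subseteq> S k)"
    proof (intro allI impI)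
      fix m assume m: "m < length fam" "0 < m"
      then obtain k where "k < m" "set (tfam!m) \<subseteq> set (fam!k)" using C3'[OF m(1)] by blast
      then show "\<exists>k<m. T m \<subseteq> S k" unfolding S_def T_def by (meson image_mono)
    qed
  qed
  have "(\<Sum>k<length fam. card (S k) ^ card {..<l} - card (T k) ^ card {..<l})
      = (\<Sum>k<length fam. length (fam!k) ^ l - length (tfam!k) ^ l)"
    by (rule sum.cong) (simp_all add: cS cT)
  then show ?thesis
    using comm_tuples_union[OF C1 C2 ne, of l] U main by simp
qed

definition fam4 :: "nat list list list" where
  "fam4 = [
    [[0,1,2,3],[1,0,3,2],[2,3,0,1],[3,2,1,0]],
    [[0,1,2,3],[1,0,2,3],[0,1,3,2],[1,0,3,2]],
    [[0,1,2,3],[2,1,0,3],[0,3,2,1],[2,3,0,1]],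
    [[0,1,2,3],[3,1,2,0],[0,2,1,3],[3,2,1,0]],
    [[0,1,2,3],[2,3,1,0],[1,0,3,2],[3,2,0,1]],
    [[0,1,2,3],[1,2,3,0],[2,3,0,1],[3,0,1,2]],
    [[0,1,2,3],[1,3,0,2],[3,2,1,0],[2,0,3,1]],
    [[0,1,2,3],[1,2,0,3],[2,0,1,3]],
    [[0,1,2,3],[1,3,2,0],[3,0,2,1]],
    [[0,1,2,3],[2,1,3,0],[3,1,0,2]],
    [[0,1,2,3],[0,2,3,1],[0,3,1,2]]]"

definition tfam4 :: "nat list list list" where
  "tfam4 = [[], [[0,1,2,3],[1,0,3,2]], [[0,1,2,3],[2,3,0,1]], [[0,1,2,3],[3,2,1,0]],
    [[0,1,2,3],[1,0,3,2]], [[0,1,2,3],[2,3,0,1]], [[0,1,2,3],[3,2,1,0]],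
    [[0,1,2,3]], [[0,1,2,3]], [[0,1,2,3]], [[0,1,2,3]]]"

lemma c1_4: "\<forall>F\<in>set fam4. \<forall>x\<in>set F. x \<in> set (perms 4) \<and> (\<forall>y\<in>set F. lcomm 4 x y)"
  by code_simp
lemma c2_4: "\<forall>xs\<in>set (perms 4). xs \<in> set (hd fam4) \<or> (\<exists>F\<in>set fam4. \<forall>ys\<in>set (perms 4). lcomm 4 xs ys \<longrightarrow> ys \<in> set F)"
  by code_simp
lemma c3_4: "\<forall>m\<in>set [0..<length fam4]. distinct (fam4!m) \<and> distinct (tfam4!m) \<and> set (tfam4!m) \<subseteq> set (fam4!m)
        \<and> (\<forall>k\<in>set [0..<m]. set (fam4!m) \<inter> set (fam4!k) \<subseteq> set (tfam4!m))
        \<and> (0 < m \<longrightarrow> (\<exists>k\<in>set [0..<m]. set (tfam4!m) \<subseteq> set (fam4!k)))"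
  by code_simp

lemma len_fam4: "length fam4 = 11" "hd tfam4 = []" "fam4 \<noteq> []" "length tfam4 = length fam4"
  by (simp_all add: fam4_def tfam4_def)

lemma card4_nat: "l \<ge> 1 \<Longrightarrow> card (comm_tuples l 4) = (\<Sum>k<11. length (fam4!k) ^ l - length (tfam4!k) ^ l)"
  using card_comm[OF _ c1_4 c2_4 len_fam4(3) len_fam4(4) len_fam4(2) c3_4] len_fam4(1) by simp

lemma card4: assumes "l \<ge> 1" shows "real (card (comm_tuples l 4)) = 7*4^l + 4*3^l - 6*2^l - 4"
proof -
  have L1: "map length fam4 = [4,4,4,4,4,4,4,3,3,3,3]" by code_simp
  have L2: "map length tfam4 = [0,2,2,2,2,2,2,1,1,1,1]" by code_simp
  have "card (comm_tuples l 4) = (\<Sum>k<11. [4,4,4,4,4,4,4,3,3,3,3] ! k ^ l - [0,2,2,2,2,2,2,1,1,1,1] ! k ^ l)"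
    unfolding card4_nat[OF assms]
  proof (rule sum.cong)
    fix k assume "k \<in> {..<(11::nat)}"
    then have "k < length fam4" "k < length tfam4" using len_fam4 by auto
    then show "length (fam4!k) ^ l - length (tfam4!k) ^ l = [4,4,4,4,4,4,4,3,3,3,3] ! k ^ l - [0,2,2,2,2,2,2,1,1,1,1] ! k ^ l"
    proof -
      have e1: "length (fam4!k) = [4,4,4,4,4,4,4,3,3,3,3] ! k" using L1 \<open>k < length fam4\<close> by (metis nth_map)
      have e2: "length (tfam4!k) = [0,2,2,2,2,2,2,1,1,1,1] ! k" using L2 \<open>k < length tfam4\<close> by (metis nth_map)
      show ?thesis by (simp only: e1 e2)
    qed
  qed simp
  also have "\<dots> = sum_list (map (\<lambda>k. [4,4,4,4,4,4,4,3,3,3,3] ! k ^ l - [0,2,2,2,2,2,2,1,1,1,1] ! k ^ l) [0..<11])"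
    by (simp add: sum_set_upt_conv_sum_list_nat[symmetric] atLeast0LessThan)
  also have "\<dots> = (4^l - 0^l) + 6 * (4^l - 2^l) + 4 * (3^l - 1)"
    by (simp add: upt_rec)
  finally have e: "card (comm_tuples l 4) = (4^l - 0^l) + 6 * (4^l - 2^l) + 4 * (3^l - 1)" .
  have z: "(0::nat) ^ l = 0" using assms by simp
  have a: "(2::nat)^l \<le> 4^l" by (simp add: power_mono)
  have b: "(1::nat) \<le> 3^l" by simp
  show ?thesis unfolding e z using a b by (simp add: of_nat_diff)
qed

definition fam3 :: "nat list list list" where
  "fam3 = [[[0,1,2],[1,2,0],[2,0,1]], [[0,1,2],[1,0,2]], [[0,1,2],[2,1,0]], [[0,1,2],[0,2,1]]]"
definition tfam3 :: "nat list list list" where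
  "tfam3 = [[], [[0,1,2]], [[0,1,2]], [[0,1,2]]]"

lemma card3: assumes "l \<ge> 1" shows "real (card (comm_tuples l 3)) = 3^l + 3*2^l - 3"
proof -
  have c1: "\<forall>F\<in>set fam3. \<forall>x\<in>set F. x \<in> set (perms 3) \<and> (\<forall>y\<in>set F. lcomm 3 x y)" by code_simp
  have c2: "\<forall>xs\<in>set (perms 3). xs \<in> set (hd fam3) \<or> (\<exists>F\<in>set fam3. \<forall>ys\<in>set (perms 3). lcomm 3 xs ys \<longrightarrow> ys \<in> set F)"
    by code_simp
  have c3: "\<forall>m\<in>set [0..<length fam3]. distinct (fam3!m) \<and> distinct (tfam3!m) \<and> set (tfam3!m) \<subseteq> set (fam3!m)
        \<and> (\<forall>k\<in>set [0..<m]. set (fam3!m) \<inter> set (fam3!k) \<subseteq> set (tfam3!m))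
        \<and> (0 < m \<longrightarrow> (\<exists>k\<in>set [0..<m]. set (tfam3!m) \<subseteq> set (fam3!k)))" by code_simp
  have lf: "length fam3 = 4" "hd tfam3 = []" "fam3 \<noteq> []" "length tfam3 = length fam3"
    by (simp_all add: fam3_def tfam3_def)
  have L1: "map length fam3 = [3,2,2,2]" by code_simp
  have L2: "map length tfam3 = [0,1,1,1]" by code_simp
  have "card (comm_tuples l 3) = (\<Sum>k<4. length (fam3!k) ^ l - length (tfam3!k) ^ l)"
    using card_comm[OF assms c1 c2 lf(3) lf(4) lf(2) c3] lf(1) by simp
  also have "\<dots> = (\<Sum>k<4. [3,2,2,2] ! k ^ l - [0,1,1,1] ! k ^ l)"
  proof (rule sum.cong)
    fix k assume "k \<in> {..<(4::nat)}"
    then have k: "k < length fam3" "k < length tfam3" using lf by auto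
    have e1: "length (fam3!k) = [3,2,2,2] ! k" using L1 k(1) by (metis nth_map)
    have e2: "length (tfam3!k) = [0,1,1,1] ! k" using L2 k(2) by (metis nth_map)
    show "length (fam3!k) ^ l - length (tfam3!k) ^ l = [3,2,2,2] ! k ^ l - [0,1,1,1] ! k ^ l"
      by (simp only: e1 e2)
  qed simp
  also have "\<dots> = sum_list (map (\<lambda>k. [3,2,2,2] ! k ^ l - [0,1,1,1] ! k ^ l) [0..<4])"
    by (simp add: sum_set_upt_conv_sum_list_nat[symmetric] atLeast0LessThan)
  also have "\<dots> = (3^l - 0^l) + 3 * (2^l - 1)"
    by (simp add: upt_rec)
  finally have e: "card (comm_tuples l 3) = (3^l - 0^l) + 3 * (2^l - 1)" .
  have z: "(0::nat) ^ l = 0" using assms by simp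
  have b: "(1::nat) \<le> 2^l" by simp
  show ?thesis unfolding e z using b by (simp add: of_nat_diff)
qed

lemma card_small:
  assumes "l \<ge> 1" and "n \<le> 2"
  shows "real (card (comm_tuples l n)) = (if n = 2 then 2^l else 1)"
proof -
  define fam where "fam = [perms n]"
  define tfam :: "nat list list list" where "tfam = [[]]"
  have c1: "\<forall>F\<in>set fam. \<forall>x\<in>set F. x \<in> set (perms n) \<and> (\<forall>y\<in>set F. lcomm n x y)"
    using assms(2) unfolding fam_def
    by (cases n; cases "n - 1"; cases "n - 2") (simp_all, code_simp+)
  have c2: "\<forall>xs\<in>set (perms n). xs \<in> set (hd fam) \<or> (\<exists>F\<in>set fam. \<forall>ys\<in>set (perms n). lcomm n xs ys \<longrightarrow> ys \<in> set F)"
    unfolding fam_def by simp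
  have dp: "distinct (perms n)" unfolding perms_def
    by (simp add: distinct_n_lists)
  have c3: "\<forall>m\<in>set [0..<length fam]. distinct (fam!m) \<and> distinct (tfam!m) \<and> set (tfam!m) \<subseteq> set (fam!m)
        \<and> (\<forall>k\<in>set [0..<m]. set (fam!m) \<inter> set (fam!k) \<subseteq> set (tfam!m))
        \<and> (0 < m \<longrightarrow> (\<exists>k\<in>set [0..<m]. set (tfam!m) \<subseteq> set (fam!k)))"
    unfolding fam_def tfam_def using dp by simp
  have lf: "hd tfam = []" "fam \<noteq> []" "length tfam = length fam"
    by (simp_all add: fam_def tfam_def)
  have "card (comm_tuples l n) = (\<Sum>k<length fam. length (fam!k) ^ l - length (tfam!k) ^ l)"
    using card_comm[OF assms(1) c1 c2 lf(2) lf(3) lf(1) c3] by simp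
  also have "\<dots> = length (perms n) ^ l - 0 ^ l" by (simp add: fam_def tfam_def)
  also have "\<dots> = length (perms n) ^ l" using assms(1) by (simp add: zero_power)
  finally have e: "card (comm_tuples l n) = length (perms n) ^ l" .
  have "length (perms n) = (if n = 2 then 2 else 1)"
    using assms(2) by (cases n; cases "n - 1"; cases "n - 2") (simp_all, code_simp+)
  then show ?thesis unfolding e by simp
qed

lemma card_sym: "card (sym_grp n) = fact n"
  unfolding sym_grp_def using card_permutations[of "{..<n}" n] by simp

lemma N_vals:
  assumes "l \<ge> 1"
  shows "N_comm l 0 = 1" "N_comm l 1 = 1" "N_comm l 2 = 2^l/2"
    "N_comm l 3 = (3^l + 3*2^l - 3)/6" "N_comm l 4 = (7*4^l + 4*3^l - 6*2^l - 4)/24"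
proof -
  have f: "fact 2 = (2::real)" "fact 3 = (6::real)" "fact 4 = (24::real)"
    by (simp_all add: fact_numeral)
  show "N_comm l 0 = 1" unfolding N_comm_def card_sym using card_small[OF assms, of 0] by simp
  show "N_comm l 1 = 1" unfolding N_comm_def card_sym using card_small[OF assms, of 1] by simp
  show "N_comm l 2 = 2^l/2" unfolding N_comm_def card_sym using card_small[OF assms, of 2] f by simp
  show "N_comm l 3 = (3^l + 3*2^l - 3)/6" unfolding N_comm_def card_sym using card3[OF assms] f by simp
  show "N_comm l 4 = (7*4^l + 4*3^l - 6*2^l - 4)/24" unfolding N_comm_def card_sym using card4[OF assms] f by simp
qed

lemma N_one: "N_comm 1 n = 1"
proof -
  have "comm_tuples 1 n = {..<1} \<rightarrow>\<^sub>E sym_grp n" unfolding comm_tuples_def by auto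
  then have "card (comm_tuples 1 n) = card (sym_grp n)" by (simp add: card_PiE)
  then show ?thesis unfolding N_comm_def card_sym by simp
qed

lemma pow2_ge: "l \<ge> 1 \<Longrightarrow> (2::real) \<le> 2^l"
  using power_increasing[of 1 l "2::real"] by simp

lemma d2_ineq: "l \<ge> 2 \<Longrightarrow> 2*(3::real)^l + 6*2^l - 6 < 3*4^l"
proof (induction l rule: dec_induct)
  case base then show ?case by simp
next
  case (step n)
  have "(2::real) \<le> 2^n" using step(1) pow2_ge by simp
  moreover have "(1::real) \<le> 3^n" by simp
  moreover have "(1::real) \<le> 3^n" by simp
  ultimately show ?case using step(3) by (simp; linarith)
qed

lemma p9: "l \<ge> 5 \<Longrightarrow> 6*(6::real)^l \<le> 9^l"
proof (induction l rule: dec_induct)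
  case base then show ?case by simp
next
  case (step n)
  have "0 \<le> (6::real)^n" by simp
  then show ?case using step(3) by (simp; linarith)
qed

lemma h_ineq: "l \<ge> 14 \<Longrightarrow> 24*3^l + 60*2^l + 1 \<le> 4*(9::real)^l + 12*6^l - 21*8^l"
proof (induction l rule: dec_induct)
  case base then show ?case by simp
next
  case (step n)
  have "6*(6::real)^n \<le> 9^n" using step(1) p9 by simp
  moreover have "0 \<le> (3::real)^n" "0 \<le> (2::real)^n" "0 \<le> (6::real)^n" by simp_all
  ultimately show ?case using step(3) by (simp; linarith)
qed

definition FF :: "nat \<Rightarrow> real" where
  "FF l = 4*9^l + 12*6^l - 24*3^l + 54*4^l - 60*2^l + 36 - 21*8^l"

lemma Delta3_eq: assumes "l \<ge> 1" shows "Delta_comm l 3 = FF l / 144"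
proof -
  have p: "(9::real)^l = 3^l*3^l" "(6::real)^l = 3^l*2^l" "(8::real)^l = 2^l*2^l*2^l" "(4::real)^l = 2^l*2^l"
    by (simp_all add: power_mult_distrib[symmetric])
  have "Delta_comm l 3 = ((3^l + 3*2^l - 3)/6)^2 - (2^l/2) * ((7*4^l + 4*3^l - 6*2^l - 4)/24)"
  proof -
    have e: "(3::nat) - 1 = 2" "(3::nat) + 1 = 4" by simp_all
    show ?thesis unfolding Delta_comm_def e by (simp only: N_vals[OF assms])
  qed
  also have "\<dots> = FF l / 144" unfolding FF_def p by (simp add: field_simps power2_eq_square)
  finally show ?thesis .
qed

lemma FF_neg: "\<forall>l\<in>set [2..<14]. FF l < 0"
  by (simp add: FF_def upt_rec)

lemma FF_pos: assumes "l \<ge> 14" shows "FF l > 0"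
proof -
  have h: "24*3^l + 60*2^l + 1 \<le> 4*(9::real)^l + 12*6^l - 21*8^l" using h_ineq[OF assms] .
  have "(0::real) \<le> 4^l" by simp
  then show ?thesis unfolding FF_def using h by linarith
qed

theorem lemma2p1:
  shows "(\<forall>n::nat. n \<ge> 1 \<longrightarrow> Delta_comm 1 n = 0)
    \<and> (\<forall>l::nat. l > 1 \<longrightarrow> Delta_comm l 1 < 0 \<and> Delta_comm l 2 > 0)
    \<and> (\<forall>l::nat. 2 \<le> l \<and> l \<le> 13 \<longrightarrow> Delta_comm l 3 < 0)
    \<and> (\<forall>l::nat. l \<ge> 14 \<longrightarrow> Delta_comm l 3 > 0)"
proof (intro conjI allI impI)
  fix n :: nat assume "n \<ge> 1"
  show "Delta_comm 1 n = 0" unfolding Delta_comm_def N_one by simp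
next
  fix l :: nat assume l: "l > 1"
  then have l1: "l \<ge> 1" by simp
  have "(4::real) \<le> 2^l" using power_increasing[of 2 l "2::real"] l by simp
  moreover have e1: "(1::nat) - 1 = 0" "(1::nat) + 1 = 2" "(2::nat) - 1 = 1" "(2::nat) + 1 = 3" by simp_all
  ultimately show "Delta_comm l 1 < 0" unfolding Delta_comm_def e1 by (simp only: N_vals[OF l1]) simp
  have p: "(4::real)^l = 2^l*2^l" by (simp add: power_mult_distrib[symmetric])
  have "2*(3::real)^l + 6*2^l - 6 < 3*4^l" using d2_ineq l by simp
  then show "Delta_comm l 2 > 0" unfolding Delta_comm_def e1 using p
    by (simp only: N_vals[OF l1]) (simp add: field_simps power2_eq_square)
next
  fix l :: nat assume l: "2 \<le> l \<and> l \<le> 13"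
  then have "l \<in> set [2..<14]" unfolding set_upt by simp
  then have "FF l < 0" using FF_neg by blast
  then show "Delta_comm l 3 < 0" using Delta3_eq[of l] l by simp
next
  fix l :: nat assume l: "l \<ge> 14"
  then show "Delta_comm l 3 > 0" using Delta3_eq[of l] FF_pos[OF l] by simp
qed

end
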